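(* Let $\mathcal{G}$ be an ordered groupoid with $\mathcal{G}_0$ finite, let $\alpha=(A_g,\alpha_g)_{g\in\mathcal{G}}$ be a unital P.O. action of $\mathcal{G}$ on a ring $A$, and let $\beta=(B_g,\beta_g)_{g\in\mathcal{G}}$ be a globalization of $\alpha$ on a ring $B$ in which each $\varphi_e:A_e\to B_e$ is the inclusion map. Let $R=A\ltimes^o_\alpha\mathcal{G}$ and $T=B\ltimes^o_\beta\mathcal{G}$, with $1_R=\sum_{e\in\mathcal{G}_0}\overline{1_e\delta_e}$ regarded as an element of $T$ (and $R$ regarded inside $T$ via $\overline{a\delta_g}\mapsto\overline{a\delta_g}$). Then: (i) $T1_R=\sum_{g\in\mathcal{G}}\overline{\beta_g(A_{d(g)})\delta_g}$; (ii) $1_RT=\sum_{g\in\mathcal{G}}\overline{A_{r(g)}\delta_g}$; (iii) $1_RT1_R=R$; (iv) $T1_RT=T$.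
   Context: A groupoid $\mathcal{G}$ is a small category in which every morphism is invertible; $\mathcal{G}_0\subseteq\mathcal{G}$ denotes the identities, $d(g)=g^{-1}g$, $r(g)=gg^{-1}$. $\mathcal{G}$ is ordered if it carries a partial order $\le$ with: (OG1) $g\le h\Rightarrow g^{-1}\le h^{-1}$; (OG2) $g\le h$, $k\le\ell$, $gk,h\ell$ defined $\Rightarrow gk\le h\ell$; (OG3) for $e\in\mathcal{G}_0$, $e\le d(g)$, there is a unique $(g|e)\le g$ with $d(g|e)=e$; (OG3* ) for $e\le r(g)$ there is a unique $(e|g)\le g$ with $r(e|g)=e$. A partial action $\alpha=(A_g,\alpha_g)_{g\in\mathcal{G}}$ on a ring $A$: ideals $A_{r(g)}\triangleleft A$, $A_g\triangleleft A_{r(g)}$, ring isomorphisms $\alpha_g:A_{g^{-1}}\to A_g$ with (P1) $\alpha_e=\mathrm{Id}_{A_e}$ for $e\in\mathcal{G}_0$ and $A=\sum_{e\in\mathcal{G}_0}A_e$; (P2) $\alpha_h^{-1}(A_{g^{-1}}\cap A_h)\subseteq A_{(gh)^{-1}}$ whenever $gh$ is defined; (P3) $\alpha_g\alpha_h(a)=\alpha_{gh}(a)$ whenever $gh$ is defined and $a\in\alpha_h^{-1}(A_{g^{-1}}\cap A_h)$. P.O. action: additionally (PO) $g\le h\Rightarrow A_g\subseteq A_h$ and $\alpha_g=\alpha_h|_{A_{g^{-1}}}$. Unital: each $A_g=A1_g$ for a central idempotent $1_g$ of $A$. Ordered global action: a P.O. action with $A_g=A_{r(g)}$ for all $g$.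 With $\varphi_e$ the inclusions, $\beta$ being a globalization of $\alpha$ means: $\beta$ is an ordered global action of $\mathcal{G}$ on $B$, each $A_e$ ($e\in\mathcal{G}_0$) is an ideal of $B_e$, $A_g=A_{r(g)}\cap\beta_g(A_{d(g)})$, $\beta_g(a)=\alpha_g(a)$ for $a\in A_{g^{-1}}$, and $B_g=\sum_{r(h)\le r(g)}\beta_h(A_{d(h)})$ for all $g$. For a P.O. action $\alpha$ on $A$, the partial skew groupoid ring is $A\ltimes_\alpha\mathcal{G}=\bigoplus_{g\in\mathcal{G}}A_g\delta_g$ (formal symbols $\delta_g$), with componentwise addition and product $(a_g\delta_g)(b_h\delta_h)=\alpha_g(\alpha_{g^{-1}}(a_g)b_h)\delta_{gh}$ if $gh$ is defined and $0$ otherwise; it is associative when $\alpha$ is unital. The partial skew ordered groupoid ring is $A\ltimes^o_\alpha\mathcal{G}=(A\ltimes_\alpha\mathcal{G})/N$, where $N$ is the ideal generated by $\{a\delta_g-a\delta_h: g\le h,\ a\in A_g\}$; $\overline{x}$ denotes the class of $x$, and $\overline{X\delta_g}=\{\overline{x\delta_g}:x\in X\}$. *)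

theory Defs
  imports Main
begin

text \<open>A groupoid is a small category (morphisms gcar, identities gobj \<subseteq> gcar)
  in which every morphism is invertible.  gdom g = d(g) = g^-1 g, gcod g = r(g) = g g^-1;
  the composite gcomp g h (= gh) is defined iff gdom g = gcod h.  gle is the order.\<close>

record 'g ogrpd =
  gcar  :: "'g set"
  gobj  :: "'g set"
  gdom  :: "'g \<Rightarrow> 'g"
  gcod  :: "'g \<Rightarrow> 'g"
  gcomp :: "'g \<Rightarrow> 'g \<Rightarrow> 'g"
  ginv  :: "'g \<Rightarrow> 'g"
  gle   :: "'g \<Rightarrow> 'g \<Rightarrow> bool"

definition gdef :: "'g ogrpd \<Rightarrow> 'g \<Rightarrow> 'g \<Rightarrow> bool" where
  "gdef G g h \<longleftrightarrow> gdom G g = gcod G h"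

definition groupoid :: "'g ogrpd \<Rightarrow> bool" where
  "groupoid G \<longleftrightarrow>
     gobj G \<subseteq> gcar G \<and>
     (\<forall>g\<in>gcar G. gdom G g \<in> gobj G \<and> gcod G g \<in> gobj G) \<and>
     (\<forall>e\<in>gobj G. gdom G e = e \<and> gcod G e = e) \<and>
     (\<forall>g\<in>gcar G. \<forall>h\<in>gcar G. gdef G g h \<longrightarrow>
        gcomp G g h \<in> gcar G \<and> gdom G (gcomp G g h) = gdom G h \<and>
        gcod G (gcomp G g h) = gcod G g) \<and>
     (\<forall>g\<in>gcar G. \<forall>h\<in>gcar G. \<forall>k\<in>gcar G. gdef G g h \<longrightarrow> gdef G h k \<longrightarrow>
        gcomp G (gcomp G g h) k = gcomp G g (gcomp G h k)) \<and>
     (\<forall>g\<in>gcar G. gcomp G g (gdom G g) = g \<and> gcomp G (gcod G g) g = g) \<and>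
     (\<forall>g\<in>gcar G. ginv G g \<in> gcar G \<and> gdom G (ginv G g) = gcod G g \<and>
        gcod G (ginv G g) = gdom G g \<and>
        gcomp G (ginv G g) g = gdom G g \<and> gcomp G g (ginv G g) = gcod G g)"

definition ordered_groupoid :: "'g ogrpd \<Rightarrow> bool" where
  "ordered_groupoid G \<longleftrightarrow> groupoid G \<and>
     (\<forall>g\<in>gcar G. gle G g g) \<and>
     (\<forall>g\<in>gcar G. \<forall>h\<in>gcar G. gle G g h \<longrightarrow> gle G h g \<longrightarrow> g = h) \<and>
     (\<forall>g\<in>gcar G. \<forall>h\<in>gcar G. \<forall>k\<in>gcar G. gle G g h \<longrightarrow> gle G h k \<longrightarrow> gle G g k) \<and>
     \<comment> \<open>OG1\<close>
     (\<forall>g\<in>gcar G. \<forall>h\<in>gcar G. gle G g h \<longrightarrow> gle G (ginv G g) (ginv G h)) \<and>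
     \<comment> \<open>OG2\<close>
     (\<forall>g\<in>gcar G. \<forall>h\<in>gcar G. \<forall>k\<in>gcar G. \<forall>l\<in>gcar G.
        gle G g h \<longrightarrow> gle G k l \<longrightarrow> gdef G g k \<longrightarrow> gdef G h l \<longrightarrow>
        gle G (gcomp G g k) (gcomp G h l)) \<and>
     \<comment> \<open>OG3\<close>
     (\<forall>g\<in>gcar G. \<forall>e\<in>gobj G. gle G e (gdom G g) \<longrightarrow>
        (\<exists>!x. x \<in> gcar G \<and> gle G x g \<and> gdom G x = e)) \<and>
     \<comment> \<open>OG3*\<close>
     (\<forall>g\<in>gcar G. \<forall>e\<in>gobj G. gle G e (gcod G g) \<longrightarrow>
        (\<exists>!x. x \<in> gcar G \<and> gle G x g \<and> gcod G x = e))"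

text \<open>Everything lives inside the ring B, taken to be the whole type 'b;
  A is a subring of B (the maps phi_e are inclusions).\<close>

definition subring :: "'b::ring set \<Rightarrow> bool" where
  "subring S \<longleftrightarrow> 0 \<in> S \<and> (\<forall>x\<in>S. \<forall>y\<in>S. x + y \<in> S \<and> x - y \<in> S \<and> x * y \<in> S)"

definition is_ideal :: "'b::ring set \<Rightarrow> 'b set \<Rightarrow> bool" where
  "is_ideal I S \<longleftrightarrow> I \<subseteq> S \<and> 0 \<in> I \<and> (\<forall>x\<in>I. \<forall>y\<in>I. x + y \<in> I \<and> - x \<in> I) \<and>
     (\<forall>x\<in>I. \<forall>s\<in>S. s * x \<in> I \<and> x * s \<in> I)"

definition ring_iso :: "('b::ring \<Rightarrow> 'b) \<Rightarrow> 'b set \<Rightarrow> 'b set \<Rightarrow> bool" where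
  "ring_iso f X Y \<longleftrightarrow> bij_betw f X Y \<and>
     (\<forall>x\<in>X. \<forall>y\<in>X. f (x + y) = f x + f y \<and> f (x * y) = f x * f y)"

definition fsum_sets :: "'i set \<Rightarrow> ('i \<Rightarrow> 'b::comm_monoid_add set) \<Rightarrow> 'b set" where
  "fsum_sets I F = {(\<Sum>i\<in>S. x i) | S x. finite S \<and> S \<subseteq> I \<and> (\<forall>i\<in>S. x i \<in> F i)}"

definition partial_action ::
  "'g ogrpd \<Rightarrow> 'b::ring set \<Rightarrow> ('g \<Rightarrow> 'b set) \<Rightarrow> ('g \<Rightarrow> 'b \<Rightarrow> 'b) \<Rightarrow> bool" where
  "partial_action G A As al \<longleftrightarrow> subring A \<and>
     (\<forall>g\<in>gcar G. is_ideal (As (gcod G g)) A \<and> is_ideal (As g) (As (gcod G g))) \<and>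
     (\<forall>g\<in>gcar G. ring_iso (al g) (As (ginv G g)) (As g)) \<and>
     \<comment> \<open>P1\<close>
     (\<forall>e\<in>gobj G. \<forall>a\<in>As e. al e a = a) \<and> A = fsum_sets (gobj G) As \<and>
     \<comment> \<open>P2, P3\<close>
     (\<forall>g\<in>gcar G. \<forall>h\<in>gcar G. gdef G g h \<longrightarrow>
        (\<forall>a\<in>As (ginv G h). al h a \<in> As (ginv G g) \<inter> As h \<longrightarrow>
           a \<in> As (ginv G (gcomp G g h)) \<and> al g (al h a) = al (gcomp G g h) a))"

definition po_action ::
  "'g ogrpd \<Rightarrow> 'b::ring set \<Rightarrow> ('g \<Rightarrow> 'b set) \<Rightarrow> ('g \<Rightarrow> 'b \<Rightarrow> 'b) \<Rightarrow> bool" where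
  "po_action G A As al \<longleftrightarrow> partial_action G A As al \<and>
     (\<forall>g\<in>gcar G. \<forall>h\<in>gcar G. gle G g h \<longrightarrow>
        As g \<subseteq> As h \<and> (\<forall>a\<in>As (ginv G g). al g a = al h a))"

text \<open>Unital: A_g = A 1_g with 1_g a central idempotent of A; the idempotents are
  given by the function u.\<close>
definition unital_action ::
  "'g ogrpd \<Rightarrow> 'b::ring set \<Rightarrow> ('g \<Rightarrow> 'b set) \<Rightarrow> ('g \<Rightarrow> 'b) \<Rightarrow> bool" where
  "unital_action G A As u \<longleftrightarrow>
     (\<forall>g\<in>gcar G. u g \<in> A \<and> u g * u g = u g \<and> (\<forall>x\<in>A. u g * x = x * u g) \<and>
        As g = (\<lambda>a. a * u g) ` A)"

definition ordered_global_action ::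
  "'g ogrpd \<Rightarrow> ('g \<Rightarrow> 'b::ring set) \<Rightarrow> ('g \<Rightarrow> 'b \<Rightarrow> 'b) \<Rightarrow> bool" where
  "ordered_global_action G Bs be \<longleftrightarrow> po_action G UNIV Bs be \<and>
     (\<forall>g\<in>gcar G. Bs g = Bs (gcod G g))"

definition globalization ::
  "'g ogrpd \<Rightarrow> 'b::ring set \<Rightarrow> ('g \<Rightarrow> 'b set) \<Rightarrow> ('g \<Rightarrow> 'b \<Rightarrow> 'b)
     \<Rightarrow> ('g \<Rightarrow> 'b set) \<Rightarrow> ('g \<Rightarrow> 'b \<Rightarrow> 'b) \<Rightarrow> bool" where
  "globalization G A As al Bs be \<longleftrightarrow> ordered_global_action G Bs be \<and>
     (\<forall>e\<in>gobj G. is_ideal (As e) (Bs e)) \<and>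
     (\<forall>g\<in>gcar G. As g = As (gcod G g) \<inter> be g ` As (gdom G g)) \<and>
     (\<forall>g\<in>gcar G. \<forall>a\<in>As (ginv G g). be g a = al g a) \<and>
     (\<forall>g\<in>gcar G. Bs g = fsum_sets {h\<in>gcar G. gle G (gcod G h) (gcod G g)}
                                   (\<lambda>h. be h ` As (gdom G h)))"

text \<open>An element sum_g a_g delta_g of A \<rtimes>_alpha G is represented by the finitely
  supported function g \<mapsto> a_g (with a_g \<in> A_g, zero outside G).\<close>

definition skew_carrier :: "'g ogrpd \<Rightarrow> ('g \<Rightarrow> 'b::ring set) \<Rightarrow> ('g \<Rightarrow> 'b) set" where
  "skew_carrier G As = {x. finite {g. x g \<noteq> 0} \<and> (\<forall>g. g \<notin> gcar G \<longrightarrow> x g = 0) \<and>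
                         (\<forall>g\<in>gcar G. x g \<in> As g)}"

definition dlt :: "'g \<Rightarrow> 'b::ring \<Rightarrow> ('g \<Rightarrow> 'b)" where
  "dlt g a = (\<lambda>k. if k = g then a else 0)"

definition sadd :: "('g \<Rightarrow> 'b::ring) \<Rightarrow> ('g \<Rightarrow> 'b) \<Rightarrow> ('g \<Rightarrow> 'b)" where
  "sadd x y = (\<lambda>k. x k + y k)"

text \<open>(a_g delta_g)(b_h delta_h) = alpha_g(alpha_{g^-1}(a_g) b_h) delta_{gh} if gh is defined, else 0.\<close>
definition skew_mult ::
  "'g ogrpd \<Rightarrow> ('g \<Rightarrow> 'b::ring \<Rightarrow> 'b) \<Rightarrow> ('g \<Rightarrow> 'b) \<Rightarrow> ('g \<Rightarrow> 'b) \<Rightarrow> ('g \<Rightarrow> 'b)" where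
  "skew_mult G al x y = (\<lambda>k. \<Sum>p\<in>{(g, h). g \<in> gcar G \<and> h \<in> gcar G \<and> x g \<noteq> 0 \<and> y h \<noteq> 0 \<and>
         gdef G g h \<and> gcomp G g h = k}.
       al (fst p) (al (ginv G (fst p)) (x (fst p)) * y (snd p)))"

definition skew_ideal :: "('g \<Rightarrow> 'b::ring) set \<Rightarrow> (('g \<Rightarrow> 'b) \<Rightarrow> ('g \<Rightarrow> 'b) \<Rightarrow> ('g \<Rightarrow> 'b))
     \<Rightarrow> ('g \<Rightarrow> 'b) set \<Rightarrow> bool" where
  "skew_ideal C m I \<longleftrightarrow> I \<subseteq> C \<and> (\<lambda>k. 0) \<in> I \<and>
     (\<forall>x\<in>I. \<forall>y\<in>I. sadd x y \<in> I \<and> (\<lambda>k. - x k) \<in> I) \<and>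
     (\<forall>x\<in>I. \<forall>c\<in>C. m c x \<in> I \<and> m x c \<in> I)"

definition gen_ideal :: "('g \<Rightarrow> 'b::ring) set \<Rightarrow> (('g \<Rightarrow> 'b) \<Rightarrow> ('g \<Rightarrow> 'b) \<Rightarrow> ('g \<Rightarrow> 'b))
     \<Rightarrow> ('g \<Rightarrow> 'b) set \<Rightarrow> ('g \<Rightarrow> 'b) set" where
  "gen_ideal C m X = \<Inter>{I. skew_ideal C m I \<and> X \<subseteq> I}"

text \<open>The ideal N of the partial skew groupoid ring defining the ordered one.\<close>
definition ord_ideal :: "'g ogrpd \<Rightarrow> ('g \<Rightarrow> 'b::ring set) \<Rightarrow> ('g \<Rightarrow> 'b \<Rightarrow> 'b) \<Rightarrow> ('g \<Rightarrow> 'b) set" where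
  "ord_ideal G As al = gen_ideal (skew_carrier G As) (skew_mult G al)
     {(\<lambda>k. dlt g a k - dlt h a k) | g h a. g \<in> gcar G \<and> h \<in> gcar G \<and> gle G g h \<and> a \<in> As g}"

text \<open>A subset of the quotient ring (C/N) is represented by its full preimage in C:
  the preimage of the image of X is X + N.\<close>
definition sat :: "('g \<Rightarrow> 'b::ring) set \<Rightarrow> ('g \<Rightarrow> 'b) set \<Rightarrow> ('g \<Rightarrow> 'b) set" where
  "sat N X = {sadd x n | x n. x \<in> X \<and> n \<in> N}"

definition skew_fsum :: "'i set \<Rightarrow> ('i \<Rightarrow> ('g \<Rightarrow> 'b::ring) set) \<Rightarrow> ('g \<Rightarrow> 'b) set" where
  "skew_fsum I F = {(\<lambda>k. \<Sum>i\<in>S. x i k) | S x. finite S \<and> S \<subseteq> I \<and> (\<forall>i\<in>S. x i \<in> F i)}"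

definition oneR :: "'g ogrpd \<Rightarrow> ('g \<Rightarrow> 'b::ring) \<Rightarrow> ('g \<Rightarrow> 'b)" where
  "oneR G u = (\<lambda>k. if k \<in> gobj G then u k else 0)"

end

theory Submission
  imports Defs
begin

locale ctx =
  fixes G :: "'g ogrpd" and A :: "'b::ring set" and As :: "'g \<Rightarrow> 'b set"
    and al :: "'g \<Rightarrow> 'b \<Rightarrow> 'b" and u :: "'g \<Rightarrow> 'b"
    and Bs :: "'g \<Rightarrow> 'b set" and be :: "'g \<Rightarrow> 'b \<Rightarrow> 'b"
  assumes og: "ordered_groupoid G" and fin: "finite (gobj G)"
    and po: "po_action G A As al" and un: "unital_action G A As u"
    and gl: "globalization G A As al Bs be"
begin

lemma grp: "groupoid G" using og ordered_groupoid_def by auto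

lemma obj_car: "e \<in> gobj G \<Longrightarrow> e \<in> gcar G" using grp unfolding groupoid_def by blast
lemma dom_obj: "g \<in> gcar G \<Longrightarrow> gdom G g \<in> gobj G" using grp unfolding groupoid_def by blast
lemma cod_obj: "g \<in> gcar G \<Longrightarrow> gcod G g \<in> gobj G" using grp unfolding groupoid_def by blast
lemma dom_car: "g \<in> gcar G \<Longrightarrow> gdom G g \<in> gcar G" using dom_obj obj_car by blast
lemma cod_car: "g \<in> gcar G \<Longrightarrow> gcod G g \<in> gcar G" using cod_obj obj_car by blast
lemma obj_dom: "e \<in> gobj G \<Longrightarrow> gdom G e = e" using grp unfolding groupoid_def by blast
lemma obj_cod: "e \<in> gobj G \<Longrightarrow> gcod G e = e" using grp unfolding groupoid_def by blast
lemma comp_car: "g \<in> gcar G \<Longrightarrow> h \<in> gcar G \<Longrightarrow> gdom G g = gcod G h \<Longrightarrow> gcomp G g h \<in> gcar G"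
  using grp unfolding groupoid_def gdef_def by blast
lemma comp_dom: "g \<in> gcar G \<Longrightarrow> h \<in> gcar G \<Longrightarrow> gdom G g = gcod G h \<Longrightarrow> gdom G (gcomp G g h) = gdom G h"
  using grp unfolding groupoid_def gdef_def by blast
lemma comp_cod: "g \<in> gcar G \<Longrightarrow> h \<in> gcar G \<Longrightarrow> gdom G g = gcod G h \<Longrightarrow> gcod G (gcomp G g h) = gcod G g"
  using grp unfolding groupoid_def gdef_def by blast
lemma assoc: "g \<in> gcar G \<Longrightarrow> h \<in> gcar G \<Longrightarrow> k \<in> gcar G \<Longrightarrow> gdom G g = gcod G h \<Longrightarrow> gdom G h = gcod G k
   \<Longrightarrow> gcomp G (gcomp G g h) k = gcomp G g (gcomp G h k)"
  using grp unfolding groupoid_def gdef_def by blast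
lemma comp_dom_id: "g \<in> gcar G \<Longrightarrow> gcomp G g (gdom G g) = g" using grp unfolding groupoid_def by blast
lemma comp_cod_id: "g \<in> gcar G \<Longrightarrow> gcomp G (gcod G g) g = g" using grp unfolding groupoid_def by blast
lemma inv_car: "g \<in> gcar G \<Longrightarrow> ginv G g \<in> gcar G" using grp unfolding groupoid_def by blast
lemma inv_dom: "g \<in> gcar G \<Longrightarrow> gdom G (ginv G g) = gcod G g" using grp unfolding groupoid_def by blast
lemma inv_cod: "g \<in> gcar G \<Longrightarrow> gcod G (ginv G g) = gdom G g" using grp unfolding groupoid_def by blast
lemma inv_l: "g \<in> gcar G \<Longrightarrow> gcomp G (ginv G g) g = gdom G g" using grp unfolding groupoid_def by blast
lemma inv_r: "g \<in> gcar G \<Longrightarrow> gcomp G g (ginv G g) = gcod G g" using grp unfolding groupoid_def by blast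

lemma inv_inv: assumes g: "g \<in> gcar G" shows "ginv G (ginv G g) = g"
proof -
  let ?k = "ginv G g" let ?k' = "ginv G ?k"
  have k: "?k \<in> gcar G" using inv_car g by blast
  have k': "?k' \<in> gcar G" using inv_car k by blast
  have "?k' = gcomp G ?k' (gdom G ?k')" using comp_dom_id k' by simp
  also have "gdom G ?k' = gdom G g" using inv_dom[OF k] inv_cod[OF g] by simp
  also have "gdom G g = gcomp G ?k g" using inv_l g by simp
  also have "gcomp G ?k' (gcomp G ?k g) = gcomp G (gcomp G ?k' ?k) g"
    using assoc[OF k' k g] inv_dom[OF k] inv_dom[OF g] by simp
  also have "gcomp G ?k' ?k = gdom G ?k" using inv_l k by simp
  also have "gdom G ?k = gcod G g" using inv_dom g by simp
  also have "gcomp G (gcod G g) g = g" using comp_cod_id g by simp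
  finally show ?thesis .
qed

lemma inv_obj: assumes e: "e \<in> gobj G" shows "ginv G e = e"
proof -
  have ec: "e \<in> gcar G" using obj_car e by blast
  have "ginv G e = gcomp G (ginv G e) (gdom G (ginv G e))" using comp_dom_id inv_car ec by simp
  also have "\<dots> = gcomp G (ginv G e) e" using inv_dom ec obj_cod e by simp
  also have "\<dots> = e" using inv_l ec obj_dom e by simp
  finally show ?thesis .
qed

lemma po_B: "po_action G UNIV Bs be" using gl unfolding globalization_def ordered_global_action_def by blast
lemma B_cod: "g \<in> gcar G \<Longrightarrow> Bs g = Bs (gcod G g)" using gl unfolding globalization_def ordered_global_action_def by blast
lemma B_ideal: "g \<in> gcar G \<Longrightarrow> is_ideal (Bs (gcod G g)) UNIV"
  using po_B unfolding po_action_def partial_action_def by blast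
lemma B_iso: "g \<in> gcar G \<Longrightarrow> ring_iso (be g) (Bs (ginv G g)) (Bs g)"
  using po_B unfolding po_action_def partial_action_def by blast
lemma B_P1: "e \<in> gobj G \<Longrightarrow> a \<in> Bs e \<Longrightarrow> be e a = a"
  using po_B unfolding po_action_def partial_action_def by blast
lemma B_P3: "g \<in> gcar G \<Longrightarrow> h \<in> gcar G \<Longrightarrow> gdom G g = gcod G h \<Longrightarrow> a \<in> Bs (ginv G h) \<Longrightarrow>
   be h a \<in> Bs (ginv G g) \<Longrightarrow> be h a \<in> Bs h \<Longrightarrow> be g (be h a) = be (gcomp G g h) a"
  using po_B unfolding po_action_def partial_action_def gdef_def by blast
lemma B_le: "g \<in> gcar G \<Longrightarrow> h \<in> gcar G \<Longrightarrow> gle G g h \<Longrightarrow> Bs g \<subseteq> Bs h"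
  using po_B unfolding po_action_def by blast

lemma B_zero: "g \<in> gcar G \<Longrightarrow> 0 \<in> Bs g" using B_ideal B_cod unfolding is_ideal_def by metis
lemma B_add: "g \<in> gcar G \<Longrightarrow> x \<in> Bs g \<Longrightarrow> y \<in> Bs g \<Longrightarrow> x + y \<in> Bs g"
  using B_ideal B_cod unfolding is_ideal_def by metis
lemma B_neg: "g \<in> gcar G \<Longrightarrow> x \<in> Bs g \<Longrightarrow> - x \<in> Bs g"
  using B_ideal B_cod unfolding is_ideal_def by metis
lemma B_multl: "g \<in> gcar G \<Longrightarrow> x \<in> Bs g \<Longrightarrow> s * x \<in> Bs g"
  using B_ideal B_cod unfolding is_ideal_def by (metis UNIV_I)
lemma B_multr: "g \<in> gcar G \<Longrightarrow> x \<in> Bs g \<Longrightarrow> x * s \<in> Bs g"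
  using B_ideal B_cod unfolding is_ideal_def by (metis UNIV_I)
lemma B_diff: "g \<in> gcar G \<Longrightarrow> x \<in> Bs g \<Longrightarrow> y \<in> Bs g \<Longrightarrow> x - y \<in> Bs g"
  using B_add B_neg by (metis diff_conv_add_uminus)

lemma B_inv_eq: "g \<in> gcar G \<Longrightarrow> Bs (ginv G g) = Bs (gdom G g)"
  using B_cod inv_car inv_cod by metis

lemma be_maps: assumes "g \<in> gcar G" "a \<in> Bs (gdom G g)" shows "be g a \<in> Bs g"
  using B_iso[OF assms(1)] assms B_inv_eq unfolding ring_iso_def bij_betw_def by blast

lemma be_mult: assumes "g \<in> gcar G" "a \<in> Bs (gdom G g)" "b \<in> Bs (gdom G g)"
  shows "be g (a * b) = be g a * be g b"
  using B_iso[OF assms(1)] assms B_inv_eq unfolding ring_iso_def by blast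

lemma be_zero: assumes "g \<in> gcar G" shows "be g 0 = 0"
proof -
  have z: "0 \<in> Bs (ginv G g)" using B_zero inv_car assms by blast
  have "be g (0 + 0) = be g 0 + be g 0" using B_iso[OF assms] z unfolding ring_iso_def by blast
  then show ?thesis by simp
qed

lemma be_inv_be: assumes g: "g \<in> gcar G" and b: "b \<in> Bs g" shows "be g (be (ginv G g) b) = b"
proof -
  have ig: "ginv G g \<in> gcar G" using inv_car g by blast
  have b': "b \<in> Bs (ginv G (ginv G g))" using inv_inv g b by simp
  have m: "be (ginv G g) b \<in> Bs (ginv G g)" using be_maps[OF ig] b' inv_inv g B_inv_eq ig by metis
  have "be g (be (ginv G g) b) = be (gcomp G g (ginv G g)) b"
    using B_P3[OF g ig _ b' m m] inv_cod g by simp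
  also have "\<dots> = b" using inv_r g B_P1 cod_obj B_cod b by metis
  finally show ?thesis .
qed

lemma be_be_inv: assumes g: "g \<in> gcar G" and a: "a \<in> Bs (gdom G g)" shows "be (ginv G g) (be g a) = a"
proof -
  have ig: "ginv G g \<in> gcar G" using inv_car g by blast
  have "a \<in> Bs (ginv G g)" using a B_inv_eq g by simp
  then show ?thesis using be_inv_be[OF ig] inv_inv g by metis
qed


lemma pa_A: "partial_action G A As al" using po unfolding po_action_def by blast
lemma A_ideal_cod: "g \<in> gcar G \<Longrightarrow> is_ideal (As g) (As (gcod G g))"
  using pa_A unfolding partial_action_def by blast
lemma A_sub_cod: "g \<in> gcar G \<Longrightarrow> As g \<subseteq> As (gcod G g)"
  using A_ideal_cod unfolding is_ideal_def by blast
lemmas glP1 = gl[unfolded globalization_def, THEN conjunct2, THEN conjunct1]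
lemmas glP2 = gl[unfolded globalization_def, THEN conjunct2, THEN conjunct2, THEN conjunct1]
lemmas glP3 = gl[unfolded globalization_def, THEN conjunct2, THEN conjunct2, THEN conjunct2, THEN conjunct1]
lemmas glP = glP1 glP2 glP3
lemma A_ideal_B: "e \<in> gobj G \<Longrightarrow> is_ideal (As e) (Bs e)"
  using glP by blast
lemma A_sub_B: assumes "g \<in> gcar G" shows "As g \<subseteq> Bs g"
proof -
  have "As (gcod G g) \<subseteq> Bs (gcod G g)" using A_ideal_B cod_obj assms unfolding is_ideal_def by blast
  then show ?thesis using A_sub_cod assms B_cod by blast
qed
lemma A_glob: "g \<in> gcar G \<Longrightarrow> As g = As (gcod G g) \<inter> be g ` As (gdom G g)"
  using glP by blast
lemma be_al: "g \<in> gcar G \<Longrightarrow> a \<in> As (ginv G g) \<Longrightarrow> be g a = al g a"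
  using glP by blast
lemma al_iso: "g \<in> gcar G \<Longrightarrow> ring_iso (al g) (As (ginv G g)) (As g)"
  using pa_A unfolding partial_action_def by blast
lemma al_maps: "g \<in> gcar G \<Longrightarrow> a \<in> As (ginv G g) \<Longrightarrow> al g a \<in> As g"
  using al_iso unfolding ring_iso_def bij_betw_def by blast
lemma u_facts: assumes "g \<in> gcar G"
  shows "u g \<in> A" "u g * u g = u g" "\<forall>x\<in>A. u g * x = x * u g" "As g = (\<lambda>a. a * u g) ` A"
  using un assms unfolding unital_action_def by blast+
lemma u_in: assumes "g \<in> gcar G" shows "u g \<in> As g"
proof -
  note h = u_facts[OF assms]
  have "u g * u g \<in> (\<lambda>a. a * u g) ` A" by (rule image_eqI[where x="u g"]) (simp_all only: h(1))
  then have "u g \<in> (\<lambda>a. a * u g) ` A" by (simp only: h(2))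
  then show ?thesis by (simp only: h(4))
qed
lemma u_lr: assumes "g \<in> gcar G" "a \<in> As g" shows "u g * a = a" "a * u g = a"
proof -
  note h = u_facts[OF assms(1)]
  obtain a' where a': "a' \<in> A" "a = a' * u g" using assms(2) h(4) by blast
  have e1: "a * u g = a' * (u g * u g)" using a' by (simp only: mult.assoc)
  show "a * u g = a" using e1 h(2) a'(2) by simp
  have "u g * a = (u g * a') * u g" using a' by (simp only: mult.assoc)
  also have "\<dots> = (a' * u g) * u g" using h(3) a'(1) by simp
  also have "\<dots> = a" using e1 h(2) a'(2) by (simp only: mult.assoc)
  finally show "u g * a = a" .
qed
lemma A_mult: assumes "e \<in> gobj G" "x \<in> As e" "s \<in> Bs e" shows "s * x \<in> As e" "x * s \<in> As e"
  using A_ideal_B[OF assms(1)] assms unfolding is_ideal_def by blast+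
lemma A_zero: "e \<in> gobj G \<Longrightarrow> 0 \<in> As e" using A_ideal_B unfolding is_ideal_def by blast

end

lemma sum_closed_gen: assumes "0 \<in> X" "\<forall>a\<in>X. \<forall>b\<in>X. a + b \<in> X" "\<forall>i\<in>I. f i \<in> X"
  shows "sum f I \<in> X"
proof (cases "finite I")
  case True
  then show ?thesis using assms(3) by (induction I rule: finite_induct) (auto simp: assms(1,2))
qed (simp add: assms(1))

lemma fsum_closed: assumes "(\<lambda>k. 0) \<in> X" "\<forall>a\<in>X. \<forall>b\<in>X. sadd a b \<in> X" "\<forall>i\<in>I. f i \<in> X"
  shows "(\<lambda>k. \<Sum>i\<in>I. f i k) \<in> X"
proof (cases "finite I")
  case True
  then show ?thesis using assms(3)
  proof (induction I rule: finite_induct)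
    case empty then show ?case using assms(1) by simp
  next
    case (insert j I)
    have "(\<lambda>k. \<Sum>i\<in>insert j I. f i k) = sadd (f j) (\<lambda>k. \<Sum>i\<in>I. f i k)"
      using insert(1,2) by (simp add: sadd_def)
    then show ?case using insert assms(2) by auto
  qed
qed (simp add: assms(1))

context ctx begin

abbreviation "C \<equiv> skew_carrier G Bs"
abbreviation "m \<equiv> skew_mult G be"
abbreviation "one \<equiv> oneR G u"

lemma B_sum: "k \<in> gcar G \<Longrightarrow> (\<forall>i\<in>I. f i \<in> Bs k) \<Longrightarrow> sum f I \<in> Bs k"
  using sum_closed_gen[of "Bs k" I f] B_zero B_add by blast

lemma m_eval:
  assumes "finite Q" "Q \<subseteq> {(g, h). g \<in> gcar G \<and> h \<in> gcar G \<and> gdom G g = gcod G h \<and> gcomp G g h = k}"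
    "\<And>g h. g \<in> gcar G \<Longrightarrow> h \<in> gcar G \<Longrightarrow> x g \<noteq> 0 \<Longrightarrow> y h \<noteq> 0 \<Longrightarrow> gdom G g = gcod G h
       \<Longrightarrow> gcomp G g h = k \<Longrightarrow> (g, h) \<in> Q"
  shows "m x y k = (\<Sum>p\<in>Q. be (fst p) (be (ginv G (fst p)) (x (fst p)) * y (snd p)))"
  unfolding skew_mult_def gdef_def
proof (rule sum.mono_neutral_left)
  show "finite Q" by fact
  show "{(g, h). g \<in> gcar G \<and> h \<in> gcar G \<and> x g \<noteq> 0 \<and> y h \<noteq> 0 \<and> gdom G g = gcod G h \<and> gcomp G g h = k} \<subseteq> Q"
    using assms(3) by auto
  show "\<forall>i\<in>Q - {(g, h). g \<in> gcar G \<and> h \<in> gcar G \<and> x g \<noteq> 0 \<and> y h \<noteq> 0 \<and> gdom G g = gcod G h \<and> gcomp G g h = k}.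
     be (fst i) (be (ginv G (fst i)) (x (fst i)) * y (snd i)) = 0"
  proof
    fix i assume i: "i \<in> Q - {(g, h). g \<in> gcar G \<and> h \<in> gcar G \<and> x g \<noteq> 0 \<and> y h \<noteq> 0 \<and> gdom G g = gcod G h \<and> gcomp G g h = k}"
    obtain g h where gh: "i = (g, h)" by fastforce
    have c: "g \<in> gcar G" "h \<in> gcar G" using i gh assms(2) by auto
    have "x g = 0 \<or> y h = 0" using i gh assms(2) by auto
    then show "be (fst i) (be (ginv G (fst i)) (x (fst i)) * y (snd i)) = 0"
      using gh c be_zero inv_car by auto
  qed
qed

lemma m_out: assumes "k \<notin> gcar G" shows "m x y k = 0"
proof -
  have "{(g, h). g \<in> gcar G \<and> h \<in> gcar G \<and> x g \<noteq> 0 \<and> y h \<noteq> 0 \<and> gdef G g h \<and> gcomp G g h = k} = {}"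
    using assms comp_car unfolding gdef_def by blast
  then show ?thesis unfolding skew_mult_def by (simp only: sum.empty)
qed


lemma summand_in: assumes g: "g \<in> gcar G" and a: "a \<in> Bs g" shows "be g (be (ginv G g) a * b) \<in> Bs g"
proof -
  have ig: "ginv G g \<in> gcar G" using inv_car g by blast
  have "a \<in> Bs (gdom G (ginv G g))" using a inv_dom[OF g] B_cod[OF g] by simp
  then have "be (ginv G g) a \<in> Bs (ginv G g)" using be_maps[OF ig] by blast
  then have "be (ginv G g) a * b \<in> Bs (ginv G g)" using B_multr[OF ig] by blast
  then have "be (ginv G g) a * b \<in> Bs (gdom G g)" using B_inv_eq[OF g] by simp
  then show ?thesis using be_maps[OF g] by blast
qed

lemma C_iff: "x \<in> C \<longleftrightarrow> finite {g. x g \<noteq> 0} \<and> (\<forall>g. g \<notin> gcar G \<longrightarrow> x g = 0) \<and> (\<forall>g\<in>gcar G. x g \<in> Bs g)"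
  unfolding skew_carrier_def by simp

lemma m_closed: assumes x: "x \<in> C" and y: "y \<in> C" shows "m x y \<in> C"
proof -
  define I where "I k = {(g, h). g \<in> gcar G \<and> h \<in> gcar G \<and> x g \<noteq> 0 \<and> y h \<noteq> 0 \<and> gdef G g h \<and> gcomp G g h = k}" for k
  have mk: "m x y k = (\<Sum>p\<in>I k. be (fst p) (be (ginv G (fst p)) (x (fst p)) * y (snd p)))" for k
    unfolding skew_mult_def I_def by (simp only:)
  have fx: "finite {g. x g \<noteq> 0}" and fy: "finite {g. y g \<noteq> 0}" using x y C_iff by blast+
  have sub: "{k. m x y k \<noteq> 0} \<subseteq> (\<lambda>p. gcomp G (fst p) (snd p)) ` ({g. x g \<noteq> 0} \<times> {g. y g \<noteq> 0})"
  proof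
    fix k assume "k \<in> {k. m x y k \<noteq> 0}"
    then have "I k \<noteq> {}" using mk[of k] by auto
    then obtain g h where "(g, h) \<in> I k" by auto
    then show "k \<in> (\<lambda>p. gcomp G (fst p) (snd p)) ` ({g. x g \<noteq> 0} \<times> {g. y g \<noteq> 0})"
      unfolding I_def by (auto intro!: image_eqI[where x="(g, h)"])
  qed
  have fin: "finite {k. m x y k \<noteq> 0}" using finite_subset[OF sub] fx fy by blast
  have vals: "m x y k \<in> Bs k" if k: "k \<in> gcar G" for k
    unfolding mk
  proof (rule B_sum[OF k], rule ballI)
    fix p assume p: "p \<in> I k"
    obtain g h where gh: "p = (g, h)" by fastforce
    have c: "g \<in> gcar G" "h \<in> gcar G" "gdom G g = gcod G h" "gcomp G g h = k"
      using p gh unfolding I_def gdef_def by auto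
    have xg: "x g \<in> Bs g" using x c(1) C_iff by blast
    have "be g (be (ginv G g) (x g) * y h) \<in> Bs g" using summand_in[OF c(1) xg] .
    moreover have "Bs g = Bs k" using B_cod c comp_cod comp_car by metis
    ultimately show "be (fst p) (be (ginv G (fst p)) (x (fst p)) * y (snd p)) \<in> Bs k" using gh by simp
  qed
  show ?thesis unfolding C_iff using fin vals m_out by blast
qed

lemma one_in: "one \<in> C"
  unfolding C_iff
proof (intro conjI allI ballI impI)
  show "finite {g. one g \<noteq> 0}" using fin by (rule finite_subset[rotated]) (auto simp: oneR_def)
  show "one g = 0" if "g \<notin> gcar G" for g using that obj_car by (auto simp: oneR_def)
  show "one g \<in> Bs g" if g: "g \<in> gcar G" for g
    using u_in[OF g] A_sub_B[OF g] B_zero[OF g] unfolding oneR_def by auto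
qed

lemma dlt_in: assumes "g \<in> gcar G" "a \<in> Bs g" shows "dlt g a \<in> C"
  unfolding C_iff
proof (intro conjI allI ballI impI)
  show "finite {k. dlt g a k \<noteq> 0}" by (rule finite_subset[of _ "{g}"]) (auto simp: dlt_def)
  show "dlt g a k = 0" if "k \<notin> gcar G" for k using that assms by (auto simp: dlt_def)
  show "dlt g a k \<in> Bs k" if k: "k \<in> gcar G" for k
    using assms B_zero[OF k] unfolding dlt_def by auto
qed

lemma m_one_right: assumes k: "k \<in> gcar G"
  shows "m t one k = be k (be (ginv G k) (t k) * u (gdom G k))"
proof -
  have dk: "gdom G k \<in> gobj G" using dom_obj k by blast
  have "m t one k = (\<Sum>p\<in>{(k, gdom G k)}. be (fst p) (be (ginv G (fst p)) (t (fst p)) * one (snd p)))"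
  proof (rule m_eval)
    have "gdom G k \<in> gcar G" "gdom G k = gcod G (gdom G k)" "gcomp G k (gdom G k) = k"
      using k dk obj_car obj_cod comp_dom_id by simp_all
    then show "{(k, gdom G k)} \<subseteq> {(g, h). g \<in> gcar G \<and> h \<in> gcar G \<and> gdom G g = gcod G h \<and> gcomp G g h = k}"
      using k by simp
    fix g h assume a: "g \<in> gcar G" "h \<in> gcar G" "t g \<noteq> 0" "one h \<noteq> 0" "gdom G g = gcod G h" "gcomp G g h = k"
    have ho: "h \<in> gobj G" using a(4) unfolding oneR_def by (cases "h \<in> gobj G") simp_all
    have "gdom G g = h" using a(5) obj_cod[OF ho] by simp
    then have "g = k" using a(6) comp_dom_id[OF a(1)] by simp
    then show "(g, h) \<in> {(k, gdom G k)}" using \<open>gdom G g = h\<close> by simp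
  qed simp
  then show ?thesis using dk by (simp add: oneR_def)
qed

lemma m_one_left: assumes k: "k \<in> gcar G" and tk: "t k \<in> Bs k"
  shows "m one t k = u (gcod G k) * t k"
proof -
  have ck: "gcod G k \<in> gobj G" using cod_obj k by blast
  have "m one t k = (\<Sum>p\<in>{(gcod G k, k)}. be (fst p) (be (ginv G (fst p)) (one (fst p)) * t (snd p)))"
  proof (rule m_eval)
    have "gcod G k \<in> gcar G" "gdom G (gcod G k) = gcod G k" "gcomp G (gcod G k) k = k"
      using k ck obj_car obj_dom comp_cod_id by simp_all
    then show "{(gcod G k, k)} \<subseteq> {(g, h). g \<in> gcar G \<and> h \<in> gcar G \<and> gdom G g = gcod G h \<and> gcomp G g h = k}"
      using k by simp
    fix g h assume a: "g \<in> gcar G" "h \<in> gcar G" "one g \<noteq> 0" "t h \<noteq> 0" "gdom G g = gcod G h" "gcomp G g h = k"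
    have go: "g \<in> gobj G" using a(3) unfolding oneR_def by (cases "g \<in> gobj G") simp_all
    have "g = gcod G h" using a(5) obj_dom[OF go] by simp
    then have "h = k" using a(6) comp_cod_id[OF a(2)] by simp
    then show "(g, h) \<in> {(gcod G k, k)}" using \<open>g = gcod G h\<close> by simp
  qed simp
  also have "\<dots> = be (gcod G k) (be (gcod G k) (u (gcod G k)) * t k)"
    using ck inv_obj by (simp add: oneR_def)
  also have "be (gcod G k) (u (gcod G k)) = u (gcod G k)"
    using B_P1[OF ck] u_in A_sub_B obj_car ck by blast
  also have "be (gcod G k) (u (gcod G k) * t k) = u (gcod G k) * t k"
  proof -
    have "t k \<in> Bs (gcod G k)" using tk B_cod k by simp
    then have "u (gcod G k) * t k \<in> As (gcod G k)" using A_mult(2)[OF ck] u_in obj_car ck by blast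
    then show ?thesis using B_P1[OF ck] A_sub_B obj_car ck by blast
  qed
  finally show ?thesis .
qed

lemma m_dlt: assumes g: "g \<in> gcar G" and h: "h \<in> gcar G" and gh: "gdom G g = gcod G h"
  shows "m (dlt g a) (dlt h b) = dlt (gcomp G g h) (be g (be (ginv G g) a * b))"
proof
  fix k
  show "m (dlt g a) (dlt h b) k = dlt (gcomp G g h) (be g (be (ginv G g) a * b)) k"
  proof (cases "k = gcomp G g h")
    case True
    have "m (dlt g a) (dlt h b) k = (\<Sum>p\<in>{(g, h)}. be (fst p) (be (ginv G (fst p)) (dlt g a (fst p)) * dlt h b (snd p)))"
    proof (rule m_eval)
      show "{(g, h)} \<subseteq> {(g, h). g \<in> gcar G \<and> h \<in> gcar G \<and> gdom G g = gcod G h \<and> gcomp G g h = k}"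
        using g h gh True by simp
      fix g1 h1 assume a: "dlt g a g1 \<noteq> 0" "dlt h b h1 \<noteq> 0"
      have "g1 = g" using a(1) unfolding dlt_def by (cases "g1 = g") simp_all
      moreover have "h1 = h" using a(2) unfolding dlt_def by (cases "h1 = h") simp_all
      ultimately show "(g1, h1) \<in> {(g, h)}" by simp
    qed simp
    then show ?thesis using True by (simp add: dlt_def)
  next
    case False
    have "m (dlt g a) (dlt h b) k = (\<Sum>p\<in>{}. be (fst p) (be (ginv G (fst p)) (dlt g a (fst p)) * dlt h b (snd p)))"
    proof (rule m_eval)
      fix g1 h1 assume a: "dlt g a g1 \<noteq> 0" "dlt h b h1 \<noteq> 0" "gcomp G g1 h1 = k"
      have "g1 = g" using a(1) unfolding dlt_def by (cases "g1 = g") simp_all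
      moreover have "h1 = h" using a(2) unfolding dlt_def by (cases "h1 = h") simp_all
      ultimately show "(g1, h1) \<in> {}" using a(3) False by simp
    qed simp_all
    then show ?thesis using False by (simp add: dlt_def)
  qed
qed


lemma C_zero: "(\<lambda>k. 0) \<in> C" unfolding C_iff using B_zero by simp

lemma C_add: assumes "x \<in> C" "y \<in> C" shows "sadd x y \<in> C"
  unfolding C_iff
proof (intro conjI allI ballI impI)
  have "{g. sadd x y g \<noteq> 0} \<subseteq> {g. x g \<noteq> 0} \<union> {g. y g \<noteq> 0}" by (auto simp: sadd_def)
  then show "finite {g. sadd x y g \<noteq> 0}" using assms C_iff by (meson finite_Un finite_subset)
  show "sadd x y g = 0" if "g \<notin> gcar G" for g using assms that C_iff by (simp add: sadd_def)
  show "sadd x y g \<in> Bs g" if "g \<in> gcar G" for g using assms that C_iff B_add unfolding sadd_def by blast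
qed

lemma C_neg: assumes "x \<in> C" shows "(\<lambda>k. - x k) \<in> C"
  unfolding C_iff
proof (intro conjI allI ballI impI)
  show "finite {g. - x g \<noteq> 0}" using assms C_iff by simp
  show "- x g = 0" if "g \<notin> gcar G" for g using assms that C_iff by simp
  show "- x g \<in> Bs g" if "g \<in> gcar G" for g using assms that C_iff B_neg by blast
qed

lemma C_ideal: "skew_ideal C m C"
  unfolding skew_ideal_def using C_zero C_add C_neg m_closed by blast

abbreviation "Gen \<equiv> {(\<lambda>k. dlt g a k - dlt h a k) | g h a. g \<in> gcar G \<and> h \<in> gcar G \<and> gle G g h \<and> a \<in> Bs g}"
abbreviation "N \<equiv> ord_ideal G Bs be"

lemma N_def': "N = gen_ideal C m Gen" unfolding ord_ideal_def by simp

lemma Gen_C: "Gen \<subseteq> C"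
proof
  fix z assume "z \<in> Gen"
  then obtain g h a where z: "z = (\<lambda>k. dlt g a k - dlt h a k)" "g \<in> gcar G" "h \<in> gcar G" "gle G g h" "a \<in> Bs g"
    by blast
  have ah: "a \<in> Bs h" using B_le z by blast
  have "(\<lambda>k. dlt g a k - dlt h a k) = sadd (dlt g a) (\<lambda>k. - dlt h a k)" by (simp add: sadd_def fun_eq_iff)
  then show "z \<in> C" using z C_add C_neg dlt_in ah by simp
qed

lemma N_sub: "N \<subseteq> C" unfolding N_def' gen_ideal_def using C_ideal Gen_C by blast
lemma N_zero: "(\<lambda>k. 0) \<in> N" unfolding N_def' gen_ideal_def skew_ideal_def by blast
lemma N_add: "x \<in> N \<Longrightarrow> y \<in> N \<Longrightarrow> sadd x y \<in> N" unfolding N_def' gen_ideal_def skew_ideal_def by blast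
lemma N_neg: "x \<in> N \<Longrightarrow> (\<lambda>k. - x k) \<in> N" unfolding N_def' gen_ideal_def skew_ideal_def by blast
lemma Gen_N: "Gen \<subseteq> N" unfolding N_def' gen_ideal_def by blast

lemma sat_C: "sat N C = C"
proof
  show "sat N C \<subseteq> C" unfolding sat_def using N_sub C_add by blast
  show "C \<subseteq> sat N C"
  proof
    fix x assume "x \<in> C"
    moreover have "x = sadd x (\<lambda>k. 0)" by (simp add: sadd_def)
    ultimately show "x \<in> sat N C" unfolding sat_def using N_zero by blast
  qed
qed

end

lemma skew_fsum_char: assumes "\<forall>g\<in>I. 0 \<in> V g"
  shows "skew_fsum I (\<lambda>g. dlt g ` V g) = {f. finite {k. f k \<noteq> 0} \<and> (\<forall>k. k \<notin> I \<longrightarrow> f k = 0) \<and> (\<forall>k\<in>I. f k \<in> V k)}"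
proof
  show "skew_fsum I (\<lambda>g. dlt g ` V g) \<subseteq> {f. finite {k. f k \<noteq> 0} \<and> (\<forall>k. k \<notin> I \<longrightarrow> f k = 0) \<and> (\<forall>k\<in>I. f k \<in> V k)}"
  proof
    fix f assume "f \<in> skew_fsum I (\<lambda>g. dlt g ` V g)"
    then obtain S x where f: "f = (\<lambda>k. \<Sum>i\<in>S. x i k)" "finite S" "S \<subseteq> I" "\<forall>i\<in>S. x i \<in> dlt i ` V i"
      unfolding skew_fsum_def by blast
    then have "\<forall>i\<in>S. \<exists>v. v \<in> V i \<and> x i = dlt i v" by blast
    then obtain v where v: "\<forall>i\<in>S. v i \<in> V i \<and> x i = dlt i (v i)" by metis
    have fk: "f k = (if k \<in> S then v k else 0)" for k
    proof -
      have "f k = (\<Sum>i\<in>S. if k = i then v i else 0)" using f(1) v by (simp add: dlt_def)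
      also have "\<dots> = (if k \<in> S then v k else 0)" using f(2) by (rule sum.delta')
      finally show ?thesis .
    qed
    have "{k. f k \<noteq> 0} \<subseteq> S" using fk by auto
    then have "finite {k. f k \<noteq> 0}" using f(2) finite_subset by blast
    moreover have "\<forall>k. k \<notin> I \<longrightarrow> f k = 0" using fk f(3) by auto
    moreover have "\<forall>k\<in>I. f k \<in> V k" using fk v assms by auto
    ultimately show "f \<in> {f. finite {k. f k \<noteq> 0} \<and> (\<forall>k. k \<notin> I \<longrightarrow> f k = 0) \<and> (\<forall>k\<in>I. f k \<in> V k)}" by blast
  qed
  show "{f. finite {k. f k \<noteq> 0} \<and> (\<forall>k. k \<notin> I \<longrightarrow> f k = 0) \<and> (\<forall>k\<in>I. f k \<in> V k)} \<subseteq> skew_fsum I (\<lambda>g. dlt g ` V g)"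
  proof
    fix f assume f: "f \<in> {f. finite {k. f k \<noteq> 0} \<and> (\<forall>k. k \<notin> I \<longrightarrow> f k = 0) \<and> (\<forall>k\<in>I. f k \<in> V k)}"
    let ?S = "{k. f k \<noteq> 0}"
    have S: "finite ?S" "?S \<subseteq> I" using f by auto
    have "(\<lambda>k. \<Sum>i\<in>?S. dlt i (f i) k) = f"
    proof
      fix k
      have "(\<Sum>i\<in>?S. dlt i (f i) k) = (\<Sum>i\<in>?S. if k = i then f i else 0)" by (simp add: dlt_def)
      also have "\<dots> = (if k \<in> ?S then f k else 0)" using S(1) by (rule sum.delta')
      finally show "(\<Sum>i\<in>?S. dlt i (f i) k) = f k" by auto
    qed
    moreover have "\<forall>i\<in>?S. dlt i (f i) \<in> dlt i ` V i" using f S(2) by blast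
    ultimately have "f = (\<lambda>k. \<Sum>i\<in>?S. (\<lambda>i. dlt i (f i)) i k) \<and> finite ?S \<and> ?S \<subseteq> I \<and>
       (\<forall>i\<in>?S. (\<lambda>i. dlt i (f i)) i \<in> dlt i ` V i)" using S by simp
    note * = this
    show "f \<in> skew_fsum I (\<lambda>g. dlt g ` V g)" unfolding skew_fsum_def mem_Collect_eq
      apply (rule exI[where x="?S"], rule exI[where x="\<lambda>i. dlt i (f i)"])
      using * by simp
  qed
qed


context ctx begin

lemma inner_in: assumes k: "k \<in> gcar G" and c: "c \<in> Bs k"
  shows "be (ginv G k) c \<in> Bs (gdom G k)"
proof -
  have ik: "ginv G k \<in> gcar G" using inv_car k by blast
  have "c \<in> Bs (gdom G (ginv G k))" using c inv_dom[OF k] B_cod[OF k] by simp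
  then have "be (ginv G k) c \<in> Bs (ginv G k)" using be_maps[OF ik] by blast
  then show ?thesis using B_inv_eq[OF k] by simp
qed

lemma part1: "{m t one | t. t \<in> C} = skew_fsum (gcar G) (\<lambda>g. dlt g ` be g ` As (gdom G g))"
proof -
  have z: "\<forall>g\<in>gcar G. 0 \<in> be g ` As (gdom G g)"
  proof
    fix g assume g: "g \<in> gcar G"
    have "be g 0 \<in> be g ` As (gdom G g)" using A_zero[OF dom_obj[OF g]] by (rule imageI)
    then show "0 \<in> be g ` As (gdom G g)" using be_zero[OF g] by simp
  qed
  have R: "skew_fsum (gcar G) (\<lambda>g. dlt g ` be g ` As (gdom G g)) =
      {f. finite {k. f k \<noteq> 0} \<and> (\<forall>k. k \<notin> gcar G \<longrightarrow> f k = 0) \<and> (\<forall>k\<in>gcar G. f k \<in> be k ` As (gdom G k))}"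
    by (rule skew_fsum_char[OF z])
  show ?thesis unfolding R
  proof (intro equalityI subsetI)
    fix f assume "f \<in> {m t one | t. t \<in> C}"
    then obtain t where t: "t \<in> C" "f = m t one" by blast
    have fC: "f \<in> C" using m_closed[OF t(1) one_in] t(2) by simp
    have "f k \<in> be k ` As (gdom G k)" if k: "k \<in> gcar G" for k
    proof -
      have dk: "gdom G k \<in> gobj G" "gdom G k \<in> gcar G" using dom_obj dom_car k by blast+
      have "be (ginv G k) (t k) \<in> Bs (gdom G k)" using inner_in[OF k] t(1) k C_iff by blast
      then have "be (ginv G k) (t k) * u (gdom G k) \<in> As (gdom G k)"
        using A_mult(1)[OF dk(1) u_in[OF dk(2)]] by blast
      moreover have "f k = be k (be (ginv G k) (t k) * u (gdom G k))" using t(2) m_one_right[OF k] by simp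
      ultimately show ?thesis by blast
    qed
    moreover have "finite {k. f k \<noteq> 0}" "\<forall>k. k \<notin> gcar G \<longrightarrow> f k = 0" using fC[unfolded C_iff] by simp_all
    ultimately show "f \<in> {f. finite {k. f k \<noteq> 0} \<and> (\<forall>k. k \<notin> gcar G \<longrightarrow> f k = 0) \<and> (\<forall>k\<in>gcar G. f k \<in> be k ` As (gdom G k))}"
      by simp
  next
    fix f assume "f \<in> {f. finite {k. f k \<noteq> 0} \<and> (\<forall>k. k \<notin> gcar G \<longrightarrow> f k = 0) \<and> (\<forall>k\<in>gcar G. f k \<in> be k ` As (gdom G k))}"
    then have f: "finite {k. f k \<noteq> 0}" "\<forall>k. k \<notin> gcar G \<longrightarrow> f k = 0" "\<forall>k\<in>gcar G. f k \<in> be k ` As (gdom G k)"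
      by simp_all
    have fC: "f \<in> C" unfolding C_iff
    proof (intro conjI ballI)
      show "finite {g. f g \<noteq> 0}" "\<forall>g. g \<notin> gcar G \<longrightarrow> f g = 0" using f(1,2) by simp_all
      fix g assume g: "g \<in> gcar G"
      have "f g \<in> be g ` As (gdom G g)" using f(3) g by simp
      then obtain a where a: "a \<in> As (gdom G g)" "f g = be g a" by blast
      have "a \<in> Bs (gdom G g)" using A_sub_B[OF dom_car[OF g]] a(1) by blast
      then show "f g \<in> Bs g" using be_maps[OF g] a(2) by simp
    qed
    have "m f one = f"
    proof
      fix k show "m f one k = f k"
      proof (cases "k \<in> gcar G")
        case False then show ?thesis using m_out f(2) by simp
      next
        case k: True
        have "f k \<in> be k ` As (gdom G k)" using f(3) k by simp
        then obtain a where a: "a \<in> As (gdom G k)" "f k = be k a" by blast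
        have dk: "gdom G k \<in> gcar G" using dom_car k by blast
        have aB: "a \<in> Bs (gdom G k)" using a(1) A_sub_B dk by blast
        have "m f one k = be k (be (ginv G k) (be k a) * u (gdom G k))" using m_one_right[OF k] a(2) by simp
        also have "\<dots> = be k (a * u (gdom G k))" using be_be_inv[OF k aB] by simp
        also have "\<dots> = be k a" using u_lr(2)[OF dk a(1)] by simp
        finally show ?thesis using a(2) by simp
      qed
    qed
    then show "f \<in> {m t one | t. t \<in> C}" using fC by (metis (mono_tags, lifting) mem_Collect_eq)
  qed
qed

lemma part2: "{m one t | t. t \<in> C} = skew_fsum (gcar G) (\<lambda>g. dlt g ` As (gcod G g))"
proof -
  have z: "\<forall>g\<in>gcar G. 0 \<in> As (gcod G g)" using A_zero cod_obj by blast
  have R: "skew_fsum (gcar G) (\<lambda>g. dlt g ` As (gcod G g)) =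
      {f. finite {k. f k \<noteq> 0} \<and> (\<forall>k. k \<notin> gcar G \<longrightarrow> f k = 0) \<and> (\<forall>k\<in>gcar G. f k \<in> As (gcod G k))}"
    by (rule skew_fsum_char[OF z])
  show ?thesis unfolding R
  proof (intro equalityI subsetI)
    fix f assume "f \<in> {m one t | t. t \<in> C}"
    then obtain t where t: "t \<in> C" "f = m one t" by blast
    have fC: "f \<in> C" using m_closed[OF one_in t(1)] t(2) by simp
    have "f k \<in> As (gcod G k)" if k: "k \<in> gcar G" for k
    proof -
      have ck: "gcod G k \<in> gobj G" "gcod G k \<in> gcar G" using cod_obj cod_car k by blast+
      have tk: "t k \<in> Bs k" using t(1) k C_iff by blast
      then have "t k \<in> Bs (gcod G k)" using B_cod k by simp
      then have "u (gcod G k) * t k \<in> As (gcod G k)" using A_mult(2)[OF ck(1) u_in[OF ck(2)]] by blast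
      then show ?thesis using t(2) m_one_left[where t=t, OF k tk] by simp
    qed
    moreover have "finite {k. f k \<noteq> 0}" "\<forall>k. k \<notin> gcar G \<longrightarrow> f k = 0" using fC[unfolded C_iff] by simp_all
    ultimately show "f \<in> {f. finite {k. f k \<noteq> 0} \<and> (\<forall>k. k \<notin> gcar G \<longrightarrow> f k = 0) \<and> (\<forall>k\<in>gcar G. f k \<in> As (gcod G k))}"
      by simp
  next
    fix f assume "f \<in> {f. finite {k. f k \<noteq> 0} \<and> (\<forall>k. k \<notin> gcar G \<longrightarrow> f k = 0) \<and> (\<forall>k\<in>gcar G. f k \<in> As (gcod G k))}"
    then have f: "finite {k. f k \<noteq> 0}" "\<forall>k. k \<notin> gcar G \<longrightarrow> f k = 0" "\<forall>k\<in>gcar G. f k \<in> As (gcod G k)"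
      by simp_all
    have fB: "f k \<in> Bs k" if k: "k \<in> gcar G" for k
      using f k A_sub_B[OF cod_car[OF k]] B_cod[OF k] by blast
    have fC: "f \<in> C" unfolding C_iff using f(1,2) fB by simp
    have "m one f = f"
    proof
      fix k show "m one f k = f k"
      proof (cases "k \<in> gcar G")
        case False then show ?thesis using m_out f(2) by simp
      next
        case k: True
        have "m one f k = u (gcod G k) * f k" using m_one_left[where t=f, OF k fB[OF k]] .
        also have "\<dots> = f k" using u_lr(1)[OF cod_car[OF k]] f(3) k by simp
        finally show ?thesis .
      qed
    qed
    then show "f \<in> {m one t | t. t \<in> C}" using fC by (metis (mono_tags, lifting) mem_Collect_eq)
  qed
qed

lemma part3: "{m (m one t) one | t. t \<in> C} = skew_carrier G As"
proof (intro equalityI subsetI)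
  fix f assume "f \<in> {m (m one t) one | t. t \<in> C}"
  then obtain t where t: "t \<in> C" "f = m (m one t) one" by blast
  have sC: "m one t \<in> C" using m_closed[OF one_in t(1)] .
  have fC: "f \<in> C" using m_closed[OF sC one_in] t(2) by simp
  have "f k \<in> As k" if k: "k \<in> gcar G" for k
  proof -
    have ck: "gcod G k \<in> gobj G" "gcod G k \<in> gcar G" using cod_obj cod_car k by blast+
    have dk: "gdom G k \<in> gobj G" "gdom G k \<in> gcar G" using dom_obj dom_car k by blast+
    have tk: "t k \<in> Bs k" using t(1) k C_iff by blast
    define c where "c = u (gcod G k) * t k"
    have sk: "m one t k = c" using m_one_left[where t=t, OF k tk] c_def by simp
    have cA: "c \<in> As (gcod G k)" unfolding c_def using A_mult(2)[OF ck(1) u_in[OF ck(2)]] tk B_cod k by simp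
    have cB: "c \<in> Bs k" using cA A_sub_B[OF ck(2)] B_cod k by auto
    define w where "w = be (ginv G k) c"
    have wB: "w \<in> Bs (gdom G k)" unfolding w_def using inner_in[OF k cB] .
    have fk: "f k = be k (w * u (gdom G k))" using t(2) m_one_right[OF k] sk w_def by simp
    have uB: "u (gdom G k) \<in> Bs (gdom G k)" using u_in[OF dk(2)] A_sub_B[OF dk(2)] by blast
    have "w * u (gdom G k) \<in> As (gdom G k)" using A_mult(1)[OF dk(1) u_in[OF dk(2)] wB] .
    then have f1: "f k \<in> be k ` As (gdom G k)" using fk by blast
    have "f k = be k w * be k (u (gdom G k))" using fk be_mult[OF k wB uB] by simp
    also have "be k w = c" unfolding w_def using be_inv_be[OF k cB] .
    finally have "f k = c * be k (u (gdom G k))" .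
    moreover have "be k (u (gdom G k)) \<in> Bs (gcod G k)" using be_maps[OF k uB] B_cod k by simp
    ultimately have f2: "f k \<in> As (gcod G k)" using A_mult(2)[OF ck(1) cA] by simp
    show ?thesis using f1 f2 A_glob[OF k] by blast
  qed
  then show "f \<in> skew_carrier G As" using fC C_iff unfolding skew_carrier_def by blast
next
  fix f assume "f \<in> skew_carrier G As"
  then have f: "finite {k. f k \<noteq> 0}" "\<forall>k. k \<notin> gcar G \<longrightarrow> f k = 0" "\<forall>k\<in>gcar G. f k \<in> As k"
    unfolding skew_carrier_def by blast+
  have fB: "f k \<in> Bs k" if k: "k \<in> gcar G" for k using f(3) A_sub_B k by blast
  have fC: "f \<in> C" unfolding C_iff using f fB by blast
  have e1: "m one f = f"
  proof
    fix k show "m one f k = f k"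
    proof (cases "k \<in> gcar G")
      case False then show ?thesis using m_out f by simp
    next
      case k: True
      have "m one f k = u (gcod G k) * f k" using m_one_left[where t=f, OF k fB[OF k]] .
      also have "\<dots> = f k" using u_lr(1)[OF cod_car[OF k]] f(3) A_sub_cod k by blast
      finally show ?thesis .
    qed
  qed
  have e2: "m f one = f"
  proof
    fix k show "m f one k = f k"
    proof (cases "k \<in> gcar G")
      case False then show ?thesis using m_out f by simp
    next
      case k: True
      have ik: "ginv G k \<in> gcar G" using inv_car k by blast
      have dk: "gdom G k \<in> gcar G" using dom_car k by blast
      have fk: "f k \<in> As (ginv G (ginv G k))" using f(3) k inv_inv k by simp
      have "be (ginv G k) (f k) = al (ginv G k) (f k)" using be_al[OF ik fk] .
      moreover have "al (ginv G k) (f k) \<in> As (ginv G k)" using al_maps[OF ik fk] .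
      ultimately have "be (ginv G k) (f k) \<in> As (gdom G k)" using A_sub_cod[OF ik] inv_cod[OF k] by auto
      then have "be (ginv G k) (f k) * u (gdom G k) = be (ginv G k) (f k)" using u_lr(2)[OF dk] by blast
      then have "m f one k = be k (be (ginv G k) (f k))" using m_one_right[OF k] by simp
      also have "\<dots> = f k" using be_inv_be[OF k fB[OF k]] .
      finally show ?thesis .
    qed
  qed
  have "f = m (m one f) one" using e1 e2 by simp
  then show "f \<in> {m (m one t) one | t. t \<in> C}" using fC by blast
qed


abbreviation "L4 \<equiv> {(\<lambda>k. \<Sum>i\<in>S. m (m (x i) one) (y i) k) | S x y.
                   finite (S :: nat set) \<and> (\<forall>i\<in>S. x i \<in> C \<and> y i \<in> C)}"

lemma L4_sub: "L4 \<subseteq> C"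
proof
  fix z assume "z \<in> L4"
  then obtain S :: "nat set" and x y where z: "z = (\<lambda>k. \<Sum>i\<in>S. m (m (x i) one) (y i) k)" "\<forall>i\<in>S. x i \<in> C \<and> y i \<in> C"
    unfolding mem_Collect_eq by (elim exE conjE) blast
  have cadd: "\<forall>a\<in>C. \<forall>b\<in>C. sadd a b \<in> C" using C_add by blast
  have "\<forall>i\<in>S. m (m (x i) one) (y i) \<in> C" using z(2) m_closed one_in by blast
  then show "z \<in> C" unfolding z(1) by (rule fsum_closed[OF C_zero cadd])
qed

lemma L4_gen: assumes I: "finite I" and XY: "\<forall>i\<in>I. X i \<in> C \<and> Y i \<in> C"
  shows "(\<lambda>k. \<Sum>i\<in>I. m (m (X i) one) (Y i) k) \<in> L4"
proof -
  obtain e where e: "bij_betw e {0..<card I} I" using ex_bij_betw_nat_finite[OF I] by blast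
  have eq: "(\<lambda>k. \<Sum>i\<in>I. m (m (X i) one) (Y i) k) = (\<lambda>k. \<Sum>j\<in>{0..<card I}. m (m ((X \<circ> e) j) one) ((Y \<circ> e) j) k)"
  proof
    fix k
    show "(\<Sum>i\<in>I. m (m (X i) one) (Y i) k) = (\<Sum>j\<in>{0..<card I}. m (m ((X \<circ> e) j) one) ((Y \<circ> e) j) k)"
      using sum.reindex_bij_betw[OF e, of "\<lambda>i. m (m (X i) one) (Y i) k"] by simp
  qed
  have "\<forall>j\<in>{0..<card I}. (X \<circ> e) j \<in> C \<and> (Y \<circ> e) j \<in> C" using XY bij_betw_apply[OF e] by simp
  note * = this
  show ?thesis unfolding eq mem_Collect_eq
    apply (rule exI[where x="{0..<card I}"], rule exI[where x="X \<circ> e"], rule exI[where x="Y \<circ> e"])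
    using * by simp
qed

lemma N_fsum: "\<forall>i\<in>I. f i \<in> N \<Longrightarrow> (\<lambda>k. \<Sum>i\<in>I. f i k) \<in> N"
proof -
  assume a: "\<forall>i\<in>I. f i \<in> N"
  have nadd: "\<forall>a\<in>N. \<forall>b\<in>N. sadd a b \<in> N" using N_add by blast
  show ?thesis by (rule fsum_closed[OF N_zero nadd a])
qed

lemmas og3s_all = og[unfolded ordered_groupoid_def, THEN conjunct2, THEN conjunct2, THEN conjunct2,
  THEN conjunct2, THEN conjunct2, THEN conjunct2, THEN conjunct2]

lemma og3s: assumes "g \<in> gcar G" "e \<in> gobj G" "gle G e (gcod G g)"
  shows "\<exists>x. x \<in> gcar G \<and> gle G x g \<and> gcod G x = e"
proof -
  have "\<exists>!x. x \<in> gcar G \<and> gle G x g \<and> gcod G x = e" using og3s_all assms by blast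
  then show ?thesis by blast
qed

lemmas glP5 = gl[unfolded globalization_def, THEN conjunct2, THEN conjunct2, THEN conjunct2, THEN conjunct2]

lemma dlt_one: assumes h: "h \<in> gcar G" and a: "a \<in> As (gdom G h)"
  shows "m (dlt h (be h a)) one = dlt h (be h a)"
proof
  fix k
  show "m (dlt h (be h a)) one k = dlt h (be h a) k"
  proof (cases "k \<in> gcar G")
    case False
    then have "k \<noteq> h" using h by blast
    then show ?thesis using m_out False by (simp add: dlt_def)
  next
    case k: True
    have dh: "gdom G h \<in> gcar G" using dom_car h by blast
    show ?thesis
    proof (cases "k = h")
      case True
      have aB: "a \<in> Bs (gdom G h)" using a A_sub_B[OF dh] by blast
      have "m (dlt h (be h a)) one k = be h (be (ginv G h) (be h a) * u (gdom G h))"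
        using m_one_right[OF k] True by (simp add: dlt_def)
      also have "\<dots> = be h (a * u (gdom G h))" using be_be_inv[OF h aB] by simp
      also have "\<dots> = be h a" using u_lr(2)[OF dh a] by simp
      finally show ?thesis using True by (simp add: dlt_def)
    next
      case False
      have "m (dlt h (be h a)) one k = be k (be (ginv G k) 0 * u (gdom G k))"
        using m_one_right[OF k] False by (simp add: dlt_def)
      also have "\<dots> = 0" using be_zero[OF k] be_zero[OF inv_car[OF k]] by simp
      finally show ?thesis using False by (simp add: dlt_def)
    qed
  qed
qed


lemma piece:
  assumes g: "g \<in> gcar G" and h: "h \<in> gcar G" and a: "a \<in> As (gdom G h)"
    and r: "r \<in> gcar G" and rg: "gle G r g" and rh: "gcod G r = gcod G h"
  shows "dlt h (be h a) \<in> C" "dlt (gcomp G (ginv G h) r) (u (gdom G h)) \<in> C"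
    "m (m (dlt h (be h a)) one) (dlt (gcomp G (ginv G h) r) (u (gdom G h))) = dlt r (be h a)"
    "(\<lambda>k. - (dlt r (be h a) k - dlt g (be h a) k)) \<in> N"
proof -
  have ih: "ginv G h \<in> gcar G" using inv_car h by blast
  have dh: "gdom G h \<in> gcar G" using dom_car h by blast
  have aB: "a \<in> Bs (gdom G h)" using a A_sub_B[OF dh] by blast
  have bB: "be h a \<in> Bs h" using be_maps[OF h aB] .
  show X: "dlt h (be h a) \<in> C" using dlt_in[OF h bB] .
  have d1: "gdom G (ginv G h) = gcod G r" using inv_dom[OF h] rh by simp
  have cC: "gcomp G (ginv G h) r \<in> gcar G" using comp_car[OF ih r d1] .
  have cc: "gcod G (gcomp G (ginv G h) r) = gdom G h" using comp_cod[OF ih r d1] inv_cod[OF h] by simp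
  have uB: "u (gdom G h) \<in> Bs (gdom G h)" using u_in[OF dh] A_sub_B[OF dh] by blast
  have "Bs (gcomp G (ginv G h) r) = Bs (gdom G h)" using B_cod[OF cC] cc by simp
  then show "dlt (gcomp G (ginv G h) r) (u (gdom G h)) \<in> C" using dlt_in[OF cC] uB by simp
  have d2: "gdom G h = gcod G (gcomp G (ginv G h) r)" using cc by simp
  have comp: "gcomp G h (gcomp G (ginv G h) r) = r"
  proof -
    have "gcomp G h (gcomp G (ginv G h) r) = gcomp G (gcomp G h (ginv G h)) r"
      using assoc[OF h ih r _ d1] inv_cod[OF h] by simp
    also have "\<dots> = gcomp G (gcod G r) r" using inv_r[OF h] rh by simp
    also have "\<dots> = r" using comp_cod_id[OF r] .
    finally show ?thesis .
  qed
  have "m (m (dlt h (be h a)) one) (dlt (gcomp G (ginv G h) r) (u (gdom G h)))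
      = m (dlt h (be h a)) (dlt (gcomp G (ginv G h) r) (u (gdom G h)))" using dlt_one[OF h a] by simp
  also have "\<dots> = dlt r (be h (be (ginv G h) (be h a) * u (gdom G h)))"
    using m_dlt[OF h cC d2] comp by simp
  also have "be (ginv G h) (be h a) * u (gdom G h) = a" using be_be_inv[OF h aB] u_lr(2)[OF dh a] by simp
  finally show "m (m (dlt h (be h a)) one) (dlt (gcomp G (ginv G h) r) (u (gdom G h))) = dlt r (be h a)" .
  have "Bs r = Bs h" using B_cod[OF r] B_cod[OF h] rh by simp
  then have "be h a \<in> Bs r" using bB by simp
  then have "(\<lambda>k. dlt r (be h a) k - dlt g (be h a) k) \<in> Gen" using r g rg by blast
  then have "(\<lambda>k. dlt r (be h a) k - dlt g (be h a) k) \<in> N" using Gen_N by blast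
  from N_neg[OF this] show "(\<lambda>k. - (dlt r (be h a) k - dlt g (be h a) k)) \<in> N" by simp
qed


lemma part4: "sat N L4 = sat N C"
proof
  show "sat N L4 \<subseteq> sat N C" unfolding sat_def using L4_sub by blast
  show "sat N C \<subseteq> sat N L4"
  proof
    fix t assume "t \<in> sat N C"
    then have t: "t \<in> C" using sat_C by simp
    define F where "F = {g. t g \<noteq> 0}"
    have Ffin: "finite F" using t C_iff F_def by simp
    have FG: "F \<subseteq> gcar G" using t C_iff F_def by blast
    define H where "H g = {h \<in> gcar G. gle G (gcod G h) (gcod G g)}" for g
    define V where "V h = be h ` As (gdom G h)" for h
    have ex: "\<forall>g\<in>F. \<exists>S x. finite S \<and> S \<subseteq> H g \<and> (\<forall>h\<in>S. x h \<in> V h) \<and> t g = (\<Sum>h\<in>S. x h)"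
    proof
      fix g assume g: "g \<in> F"
      have gG: "g \<in> gcar G" using g FG by blast
      have "t g \<in> Bs g" using t C_iff gG by blast
      also have "Bs g = fsum_sets (H g) V" using glP5 gG unfolding H_def V_def by blast
      finally have "t g \<in> fsum_sets (H g) V" .
      then obtain S :: "'g set" and x where Sx: "t g = (\<Sum>i\<in>S. x i)" "finite S" "S \<subseteq> H g" "\<forall>i\<in>S. x i \<in> V i"
        unfolding fsum_sets_def mem_Collect_eq by (elim exE conjE) blast
      show "\<exists>S x. finite S \<and> S \<subseteq> H g \<and> (\<forall>h\<in>S. x h \<in> V h) \<and> t g = (\<Sum>h\<in>S. x h)"
        using Sx by blast
    qed
    obtain SS where SS: "\<forall>g\<in>F. \<exists>x. finite (SS g) \<and> SS g \<subseteq> H g \<and> (\<forall>h\<in>SS g. x h \<in> V h) \<and> t g = (\<Sum>h\<in>SS g. x h)"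
      using bchoice[OF ex] by blast
    obtain XX where XX: "\<forall>g\<in>F. finite (SS g) \<and> SS g \<subseteq> H g \<and> (\<forall>h\<in>SS g. XX g h \<in> V h) \<and> t g = (\<Sum>h\<in>SS g. XX g h)"
      using bchoice[OF SS] by blast
    define Sig where "Sig = Sigma F SS"
    have Sfin: "finite Sig" unfolding Sig_def using Ffin XX by blast
    have pS: "fst p \<in> F" "snd p \<in> SS (fst p)" if "p \<in> Sig" for p using that unfolding Sig_def by auto
    have pG: "fst p \<in> gcar G" "snd p \<in> gcar G" "gle G (gcod G (snd p)) (gcod G (fst p))" if "p \<in> Sig" for p
      using pS[OF that] FG XX unfolding H_def by blast+
    have exA: "\<forall>p\<in>Sig. \<exists>a. a \<in> As (gdom G (snd p)) \<and> XX (fst p) (snd p) = be (snd p) a"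
    proof
      fix p assume p: "p \<in> Sig"
      have "XX (fst p) (snd p) \<in> V (snd p)" using XX pS[OF p] by blast
      then show "\<exists>a. a \<in> As (gdom G (snd p)) \<and> XX (fst p) (snd p) = be (snd p) a" unfolding V_def by blast
    qed
    obtain AA where AA: "\<forall>p\<in>Sig. AA p \<in> As (gdom G (snd p)) \<and> XX (fst p) (snd p) = be (snd p) (AA p)"
      using bchoice[OF exA] by blast
    have exR: "\<forall>p\<in>Sig. \<exists>x. x \<in> gcar G \<and> gle G x (fst p) \<and> gcod G x = gcod G (snd p)"
    proof
      fix p assume p: "p \<in> Sig"
      show "\<exists>x. x \<in> gcar G \<and> gle G x (fst p) \<and> gcod G x = gcod G (snd p)"
        using og3s[OF pG(1)[OF p] cod_obj[OF pG(2)[OF p]] pG(3)[OF p]] .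
    qed
    obtain R where R: "\<forall>p\<in>Sig. R p \<in> gcar G \<and> gle G (R p) (fst p) \<and> gcod G (R p) = gcod G (snd p)"
      using bchoice[OF exR] by blast
    define b where "b p = be (snd p) (AA p)" for p
    define X where "X p = dlt (snd p) (b p)" for p
    define Y where "Y p = dlt (gcomp G (ginv G (snd p)) (R p)) (u (gdom G (snd p)))" for p
    have P: "X p \<in> C" "Y p \<in> C" "m (m (X p) one) (Y p) = dlt (R p) (b p)"
        "(\<lambda>k. - (dlt (R p) (b p) k - dlt (fst p) (b p) k)) \<in> N" if p: "p \<in> Sig" for p
    proof -
      have a: "AA p \<in> As (gdom G (snd p))" using AA p by blast
      have r: "R p \<in> gcar G" "gle G (R p) (fst p)" "gcod G (R p) = gcod G (snd p)" using R p by blast+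
      note pc = piece[OF pG(1)[OF p] pG(2)[OF p] a r]
      show "X p \<in> C" "Y p \<in> C" "m (m (X p) one) (Y p) = dlt (R p) (b p)"
        "(\<lambda>k. - (dlt (R p) (b p) k - dlt (fst p) (b p) k)) \<in> N"
        unfolding X_def Y_def b_def using pc by simp_all
    qed
    define s where "s = (\<lambda>k. \<Sum>p\<in>Sig. m (m (X p) one) (Y p) k)"
    define n where "n = (\<lambda>k. \<Sum>p\<in>Sig. - (dlt (R p) (b p) k - dlt (fst p) (b p) k))"
    have sL: "s \<in> L4" unfolding s_def using L4_gen[OF Sfin] P by blast
    have nN: "n \<in> N" unfolding n_def using N_fsum[of Sig "\<lambda>p k. - (dlt (R p) (b p) k - dlt (fst p) (b p) k)"] P(4)
      by blast
    have "t = sadd s n"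
    proof
      fix k
      have "sadd s n k = (\<Sum>p\<in>Sig. m (m (X p) one) (Y p) k + - (dlt (R p) (b p) k - dlt (fst p) (b p) k))"
        unfolding sadd_def s_def n_def by (simp add: sum.distrib)
      also have "\<dots> = (\<Sum>p\<in>Sig. dlt (fst p) (b p) k)"
        by (rule sum.cong) (simp_all add: P(3))
      also have "\<dots> = (\<Sum>p\<in>Sig. (\<lambda>g h. dlt g (XX g h) k) (fst p) (snd p))"
        by (rule sum.cong) (simp_all add: b_def AA)
      also have "\<dots> = (\<Sum>p\<in>Sig. case_prod (\<lambda>g h. dlt g (XX g h) k) p)"
        by (simp add: split_beta)
      also have "\<dots> = (\<Sum>g\<in>F. \<Sum>h\<in>SS g. dlt g (XX g h) k)"
        unfolding Sig_def using sum.Sigma[OF Ffin, of SS "\<lambda>g h. dlt g (XX g h) k"] XX by simp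
      also have "\<dots> = (\<Sum>g\<in>F. dlt g (t g) k)"
      proof (rule sum.cong)
        fix g assume g: "g \<in> F"
        have "t g = (\<Sum>h\<in>SS g. XX g h)" using XX g by blast
        then show "(\<Sum>h\<in>SS g. dlt g (XX g h) k) = dlt g (t g) k"
          by (cases "k = g") (simp_all add: dlt_def)
      qed simp
      also have "\<dots> = (\<Sum>g\<in>F. if k = g then t g else 0)" by (simp add: dlt_def)
      also have "\<dots> = (if k \<in> F then t k else 0)" using Ffin by (rule sum.delta')
      also have "\<dots> = t k" unfolding F_def by simp
      finally show "t k = sadd s n k" by simp
    qed
    then show "t \<in> sat N L4" unfolding sat_def using sL nN by blast
  qed
qed

end

theorem mainTheorem5:
  fixes G :: "'g ogrpd"
    and A :: "'b::ring set" and As :: "'g \<Rightarrow> 'b set" and al :: "'g \<Rightarrow> 'b \<Rightarrow> 'b"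
    and u :: "'g \<Rightarrow> 'b"
    and Bs :: "'g \<Rightarrow> 'b set" and be :: "'g \<Rightarrow> 'b \<Rightarrow> 'b"
  assumes "ordered_groupoid G"
    and "finite (gobj G)"
    and "po_action G A As al"
    and "unital_action G A As u"
    and "globalization G A As al Bs be"
  defines "TB \<equiv> skew_carrier G Bs"
    and "N \<equiv> ord_ideal G Bs be"
    and "m \<equiv> skew_mult G be"
    and "one \<equiv> oneR G u"
  shows "(sat N {m t one | t. t \<in> TB}
           = sat N (skew_fsum (gcar G) (\<lambda>g. dlt g ` be g ` As (gdom G g))))
         \<and> (sat N {m one t | t. t \<in> TB}
           = sat N (skew_fsum (gcar G) (\<lambda>g. dlt g ` As (gcod G g))))
         \<and> (sat N {m (m one t) one | t. t \<in> TB} = sat N (skew_carrier G As))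
         \<and> (sat N {(\<lambda>k. \<Sum>i\<in>S. m (m (x i) one) (y i) k) | S x y.
                   finite (S :: nat set) \<and> (\<forall>i\<in>S. x i \<in> TB \<and> y i \<in> TB)}
           = sat N TB)"
proof -
  interpret c: ctx G A As al u Bs be by (rule ctx.intro[OF assms(1-5)])
  show ?thesis unfolding TB_def N_def m_def one_def
    using c.part1 c.part2 c.part3 c.part4 by simp
qed

end
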